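(* Under the sampling and reduction setup described in the context, $$\mathrm{P}\big[\hat n<4gn/s\big]\ge 1-4e^{-2g^2/s}\qquad\text{and}\qquad \mathrm{E}\,\hat n\le 4gn/s+4ne^{-2g^2/s}.$$
   Context: Sampling setup. Let $X=(x_1,\dots,x_n)$ be a list of $n\ge 2$ elements of a totally ordered set; repeated values are allowed. Let $k$ be an integer with $1\le k\le n$, let $s$ be an integer with $1\le s\le n-1$, and let $g>0$ be real. A set $I\subset\{1,\dots,n\}$ of $s$ positions is chosen uniformly at random among all $s$-element subsets. The sample $(x_j)_{j\in I}$ has sorted elements $y_1^*\le\dots\le y_s^*$. Define $i_u:=\max\{\lceil ks/n-g\rceil,1\}$, $i_v:=\min\{\lceil ks/n+g\rceil,s\}$, $u:=y_{i_u}^*$ and $v:=y_{i_v}^*$. Reduction. Partition the positions of $X$ into - $L=\{j:x_j<u\}$, - $U=\{j:x_j=u\}$, - $M=\{j:u<x_j<v\}$, - $V=\{j:x_j=v\}$, - $R=\{j:x_j>v\}$. Define the residual size $\hat n$ by the first applicable rule: 1. If $|L|<k\le|L\cup U|$ or $|L\cup U\cup M|<k\le n-|R|$, then $\hat n:=0$. 2. Otherwise, if $k\le|L|$, then $\hat n:=|L|$. 3. Otherwise, if $n-|R|<k$, then $\hat n:=|R|$. 4. Otherwise, $\hat n:=|M|$. $\mathrm{P}$ and $\mathrm{E}$ denote probability and expectation with respect to the random choice of $I$. *)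

theory Defs
  imports "HOL-Probability.Probability"
begin

text \<open>Positions of the list X are 0-based: {0..<length X}. Ranks (k, i_u, i_v) are 1-based.\<close>

definition sample_space :: "nat \<Rightarrow> nat \<Rightarrow> nat set set" where
  "sample_space n s = {I. I \<subseteq> {0..<n} \<and> card I = s}"

definition sorted_sample :: "'a::linorder list \<Rightarrow> nat set \<Rightarrow> 'a list" where
  "sorted_sample X I = sort (map (\<lambda>j. X ! j) (sorted_list_of_set I))"

definition idx_u :: "nat \<Rightarrow> nat \<Rightarrow> nat \<Rightarrow> real \<Rightarrow> nat" where
  "idx_u n k s g = nat (max (ceiling (real k * real s / real n - g)) 1)"

definition idx_v :: "nat \<Rightarrow> nat \<Rightarrow> nat \<Rightarrow> real \<Rightarrow> nat" where
  "idx_v n k s g = nat (min (ceiling (real k * real s / real n + g)) (int s))"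

definition ystar :: "'a::linorder list \<Rightarrow> nat set \<Rightarrow> nat \<Rightarrow> 'a" where
  "ystar X I i = sorted_sample X I ! (i - 1)"

definition pivot_u :: "'a::linorder list \<Rightarrow> nat \<Rightarrow> nat \<Rightarrow> real \<Rightarrow> nat set \<Rightarrow> 'a" where
  "pivot_u X k s g I = ystar X I (idx_u (length X) k s g)"

definition pivot_v :: "'a::linorder list \<Rightarrow> nat \<Rightarrow> nat \<Rightarrow> real \<Rightarrow> nat set \<Rightarrow> 'a" where
  "pivot_v X k s g I = ystar X I (idx_v (length X) k s g)"

definition residual_size :: "'a::linorder list \<Rightarrow> nat \<Rightarrow> nat \<Rightarrow> real \<Rightarrow> nat set \<Rightarrow> nat" where
  "residual_size X k s g I =
    (let n = length X; u = pivot_u X k s g I; v = pivot_v X k s g I;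
         L = {j \<in> {0..<n}. X ! j < u};
         U = {j \<in> {0..<n}. X ! j = u};
         M = {j \<in> {0..<n}. u < X ! j \<and> X ! j < v};
         R = {j \<in> {0..<n}. v < X ! j}
     in if (card L < k \<and> k \<le> card (L \<union> U)) \<or> (card (L \<union> U \<union> M) < k \<and> k \<le> n - card R) then 0
        else if k \<le> card L then card L
        else if n - card R < k then card R
        else card M)"

end

theory Submission
  imports Defs
begin


lemma card_supersets:
  assumes T: "T \<subseteq> {0..<n}" "card T = m" "m \<le> s"
  shows "card {I. I \<subseteq> {0..<n} \<and> card I = s \<and> T \<subseteq> I} = (n - m) choose (s - m)"
proof -
  have fT: "finite T" using T(1) finite_subset by blast
  have eq: "{I. I \<subseteq> {0..<n} \<and> card I = s \<and> T \<subseteq> I} = (\<lambda>J. J \<union> T) ` {J. J \<subseteq> {0..<n} - T \<and> card J = s - m}"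
  proof (rule set_eqI, rule iffI)
    fix I assume "I \<in> {I. I \<subseteq> {0..<n} \<and> card I = s \<and> T \<subseteq> I}"
    hence I: "I \<subseteq> {0..<n}" "card I = s" "T \<subseteq> I" by auto
    have "finite I" using I(1) finite_subset by blast
    have "card (I - T) = s - m" using I T fT \<open>finite I\<close> by (simp add: card_Diff_subset)
    moreover have "I = (I - T) \<union> T" using I by blast
    ultimately show "I \<in> (\<lambda>J. J \<union> T) ` {J. J \<subseteq> {0..<n} - T \<and> card J = s - m}"
      using I by (intro image_eqI[of _ _ "I - T"]) auto
  next
    fix I assume "I \<in> (\<lambda>J. J \<union> T) ` {J. J \<subseteq> {0..<n} - T \<and> card J = s - m}"
    then obtain J where J: "J \<subseteq> {0..<n} - T" "card J = s - m" "I = J \<union> T" by auto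
    have "finite J" using J(1) finite_subset by blast
    have "card (J \<union> T) = card J + card T" using J fT \<open>finite J\<close> by (intro card_Un_disjoint) auto
    hence "card I = s - m + m" using J T by simp
    thus "I \<in> {I. I \<subseteq> {0..<n} \<and> card I = s \<and> T \<subseteq> I}" using J T by auto
  qed
  have inj: "inj_on (\<lambda>J. J \<union> T) {J. J \<subseteq> {0..<n} - T \<and> card J = s - m}"
    by (rule inj_onI) blast
  have "card {I. I \<subseteq> {0..<n} \<and> card I = s \<and> T \<subseteq> I} = card {J. J \<subseteq> {0..<n} - T \<and> card J = s - m}"
    unfolding eq by (rule card_image[OF inj])
  also have "\<dots> = card ({0..<n} - T) choose (s - m)" by (rule n_subsets) auto
  also have "card ({0..<n} - T) = n - m" using T fT by (simp add: card_Diff_subset)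
  finally show ?thesis .
qed

lemma sum_choose_cap:
  assumes A: "A \<subseteq> {0..<n}" and m: "m \<le> s"
  shows "(\<Sum>I\<in>sample_space n s. card (I \<inter> A) choose m) = (card A choose m) * ((n - m) choose (s - m))"
proof -
  define S where "S = {T. T \<subseteq> A \<and> card T = m}"
  have fA: "finite A" using A finite_subset by blast
  have fS: "finite S" unfolding S_def using fA by (auto intro: finite_subset[of _ "Pow A"])
  have fO: "finite (sample_space n s)" unfolding sample_space_def
    by (rule finite_subset[of _ "Pow {0..<n}"]) auto
  have 1: "card (I \<inter> A) choose m = (\<Sum>T\<in>S. if T \<subseteq> I then 1 else 0)" for I
  proof -
    have "card (I \<inter> A) choose m = card {T. T \<subseteq> I \<inter> A \<and> card T = m}"
      using fA by (intro n_subsets[symmetric]) auto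
    also have "{T. T \<subseteq> I \<inter> A \<and> card T = m} = {T\<in>S. T \<subseteq> I}" unfolding S_def by auto
    also have "card \<dots> = (\<Sum>T\<in>S. if T \<subseteq> I then 1 else 0)"
      using fS by (simp add: sum.If_cases Int_def)
    finally show ?thesis .
  qed
  have 2: "(\<Sum>I\<in>sample_space n s. if T \<subseteq> I then 1 else 0) = (n - m) choose (s - m)" if "T \<in> S" for T
  proof -
    have "(\<Sum>I\<in>sample_space n s. if T \<subseteq> I then 1 else (0::nat)) = card {I \<in> sample_space n s. T \<subseteq> I}"
      using fO by (simp add: sum.If_cases Int_def)
    also have "{I \<in> sample_space n s. T \<subseteq> I} = {I. I \<subseteq> {0..<n} \<and> card I = s \<and> T \<subseteq> I}"
      unfolding sample_space_def by auto
    also have "card \<dots> = (n - m) choose (s - m)"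
      using that A m unfolding S_def by (intro card_supersets) auto
    finally show ?thesis .
  qed
  have "(\<Sum>I\<in>sample_space n s. card (I \<inter> A) choose m)
        = (\<Sum>I\<in>sample_space n s. \<Sum>T\<in>S. if T \<subseteq> I then 1 else 0)" using 1 by simp
  also have "\<dots> = (\<Sum>T\<in>S. \<Sum>I\<in>sample_space n s. if T \<subseteq> I then 1 else 0)" by (rule sum.swap)
  also have "\<dots> = (\<Sum>T\<in>S. (n - m) choose (s - m))" using 2 by simp
  also have "\<dots> = card S * ((n - m) choose (s - m))" by simp
  also have "card S = card A choose m" unfolding S_def using fA by (rule n_subsets)
  finally show ?thesis .
qed

lemma choose_absorb_step: "Suc m * (K choose Suc m) = (K - m) * (K choose m)"
  using binomial_absorption[of m K] binomial_absorb_comp[of K m] by simp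

lemma choose_ratio_le:
  assumes "K \<le> n"
  shows "real (K choose m) * real n ^ m \<le> real (n choose m) * real K ^ m"
proof (induction m)
  case 0 then show ?case by simp
next
  case (Suc m)
  have eK: "real (Suc m) * real (K choose Suc m) = real (K - m) * real (K choose m)"
    using choose_absorb_step[of m K] by (metis of_nat_mult)
  have en: "real (Suc m) * real (n choose Suc m) = real (n - m) * real (n choose m)"
    using choose_absorb_step[of m n] by (metis of_nat_mult)
  have key: "real (K - m) * real n \<le> real (n - m) * real K"
  proof (cases "m \<le> K")
    case True
    then have "m \<le> n" using assms by simp
    have "real K * real m \<le> real n * real m" using assms by (intro mult_right_mono) auto
    then show ?thesis using True \<open>m \<le> n\<close> by (simp add: of_nat_diff algebra_simps)
  next
    case False then show ?thesis by simp
  qed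
  have "real (Suc m) * (real (K choose Suc m) * real n ^ Suc m)
        = (real (Suc m) * real (K choose Suc m)) * (real n * real n ^ m)"
    by (simp only: power_Suc mult_ac)
  also have "\<dots> = (real (K - m) * real n) * (real (K choose m) * real n ^ m)"
    by (simp only: eK mult_ac)
  also have "\<dots> \<le> (real (n - m) * real K) * (real (n choose m) * real K ^ m)"
    by (rule mult_mono[OF key Suc.IH]) auto
  also have "\<dots> = (real (n - m) * real (n choose m)) * (real K * real K ^ m)"
    by (simp only: mult_ac)
  also have "\<dots> = real (Suc m) * (real (n choose Suc m) * real K ^ Suc m)"
    using en by (simp only: power_Suc mult_ac) (metis mult.assoc mult.commute)
  finally show ?case by (simp del: of_nat_Suc)
qed



lemma finite_sample_space: "finite (sample_space n s)"
  unfolding sample_space_def by (rule finite_subset[of _ "Pow {0..<n}"]) auto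

lemma card_sample_space: "card (sample_space n s) = n choose s"
  unfolding sample_space_def by (subst n_subsets) auto

lemma card_Int_le_s: "I \<in> sample_space n s \<Longrightarrow> card (I \<inter> A) \<le> s"
  unfolding sample_space_def
  by (metis (mono_tags, lifting) card_mono finite_atLeastLessThan finite_subset inf_le1 mem_Collect_eq)

lemma mgf_bound:
  assumes A: "A \<subseteq> {0..<n}" and sn: "s \<le> n" and n: "0 < n" and c: "c \<ge> 0"
  shows "(\<Sum>I\<in>sample_space n s. (1 + c) ^ card (I \<inter> A))
           \<le> real (card (sample_space n s)) * (1 + c * real (card A) / real n) ^ s"
proof -
  define K where "K = card A"
  have KN: "K \<le> n" unfolding K_def using A by (metis card_atLeastLessThan card_mono finite_atLeastLessThan diff_zero)
  have 1: "(1 + c) ^ card (I \<inter> A) = (\<Sum>m\<le>s. real (card (I \<inter> A) choose m) * c ^ m)"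
    if "I \<in> sample_space n s" for I
  proof -
    have j: "card (I \<inter> A) \<le> s" using that by (rule card_Int_le_s)
    have "(1 + c) ^ card (I \<inter> A) = (c + 1) ^ card (I \<inter> A)" by (simp add: add.commute)
    also have "\<dots> = (\<Sum>m\<le>card (I \<inter> A). real (card (I \<inter> A) choose m) * c ^ m)"
      by (subst binomial_ring) simp
    also have "\<dots> = (\<Sum>m\<le>s. real (card (I \<inter> A) choose m) * c ^ m)"
      using j by (intro sum.mono_neutral_left) auto
    finally show ?thesis .
  qed
  have "(\<Sum>I\<in>sample_space n s. (1 + c) ^ card (I \<inter> A))
        = (\<Sum>I\<in>sample_space n s. \<Sum>m\<le>s. real (card (I \<inter> A) choose m) * c ^ m)"
    using 1 by (rule sum.cong[OF refl])
  also have "\<dots> = (\<Sum>m\<le>s. \<Sum>I\<in>sample_space n s. real (card (I \<inter> A) choose m) * c ^ m)"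
    by (rule sum.swap)
  also have "\<dots> = (\<Sum>m\<le>s. real ((K choose m) * ((n - m) choose (s - m))) * c ^ m)"
  proof (rule sum.cong[OF refl])
    fix m assume "m \<in> {..s}"
    hence "m \<le> s" by simp
    have "(\<Sum>I\<in>sample_space n s. real (card (I \<inter> A) choose m) * c ^ m)
         = real (\<Sum>I\<in>sample_space n s. card (I \<inter> A) choose m) * c ^ m"
      by (simp add: sum_distrib_right)
    also have "\<dots> = real ((K choose m) * ((n - m) choose (s - m))) * c ^ m"
      unfolding K_def using sum_choose_cap[OF A \<open>m \<le> s\<close>] by simp
    finally show "(\<Sum>I\<in>sample_space n s. real (card (I \<inter> A) choose m) * c ^ m)
         = real ((K choose m) * ((n - m) choose (s - m))) * c ^ m" .
  qed
  also have "\<dots> \<le> (\<Sum>m\<le>s. real (n choose s) * (real (s choose m) * (c * (real K / real n)) ^ m))"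
  proof (rule sum_mono)
    fix m assume "m \<in> {..s}"
    hence ms: "m \<le> s" by simp
    have cm: "(n choose s) * (s choose m) = (n choose m) * ((n - m) choose (s - m))"
      using choose_mult[OF ms sn] .
    have r: "real (K choose m) \<le> real (n choose m) * (real K / real n) ^ m"
      using choose_ratio_le[OF KN, of m] n by (simp add: power_divide field_simps)
    have "real ((K choose m) * ((n - m) choose (s - m))) * c ^ m
          = real (K choose m) * (real ((n - m) choose (s - m)) * c ^ m)" by simp
    also have "\<dots> \<le> (real (n choose m) * (real K / real n) ^ m) * (real ((n - m) choose (s - m)) * c ^ m)"
      using r c by (intro mult_right_mono) auto
    also have "\<dots> = real ((n choose m) * ((n - m) choose (s - m))) * (c * (real K / real n)) ^ m"
      by (simp only: of_nat_mult power_mult_distrib mult_ac)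
    also have "\<dots> = real ((n choose s) * (s choose m)) * (c * (real K / real n)) ^ m"
      by (simp only: cm)
    finally show "real ((K choose m) * ((n - m) choose (s - m))) * c ^ m
          \<le> real (n choose s) * (real (s choose m) * (c * (real K / real n)) ^ m)" by simp
  qed
  also have "\<dots> = real (n choose s) * (\<Sum>m\<le>s. real (s choose m) * (c * (real K / real n)) ^ m)"
    by (simp add: sum_distrib_left)
  also have "(\<Sum>m\<le>s. real (s choose m) * (c * (real K / real n)) ^ m) = (c * (real K / real n) + 1) ^ s"
    by (subst binomial_ring) simp
  finally show ?thesis unfolding K_def card_sample_space by (simp add: add.commute)
qed



lemma upper_tail:
  assumes A: "A \<subseteq> {0..<n}" and sn: "s \<le> n" and s: "0 < s" and t: "t \<ge> 0"
  shows "real (card {I\<in>sample_space n s. real s * real (card A) / real n + t \<le> real (card (I \<inter> A))})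
           \<le> real (card (sample_space n s)) * exp (- 2 * t\<^sup>2 / real s)"
proof -
  define \<Omega> where "\<Omega> = sample_space n s"
  define E where "E = {I\<in>\<Omega>. real s * real (card A) / real n + t \<le> real (card (I \<inter> A))}"
  define l where "l = 4 * t / real s"
  define c where "c = exp l - 1"
  define p where "p = real (card A) / real n"
  have n: "0 < n" using s sn by simp
  have l0: "l \<ge> 0" unfolding l_def using t s by simp
  have c0: "c \<ge> 0" unfolding c_def using l0 by simp
  have p0: "p \<ge> 0" unfolding p_def by simp
  have fO: "finite \<Omega>" unfolding \<Omega>_def by (rule finite_sample_space)
  have EO: "E \<subseteq> \<Omega>" unfolding E_def by auto
  have "real (card E) * exp (l * (real s * p + t)) = (\<Sum>I\<in>E. exp (l * (real s * p + t)))" by simp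
  also have "\<dots> \<le> (\<Sum>I\<in>E. (1 + c) ^ card (I \<inter> A))"
  proof (rule sum_mono)
    fix I assume "I \<in> E"
    hence "real s * p + t \<le> real (card (I \<inter> A))" unfolding E_def p_def by simp
    hence "exp (l * (real s * p + t)) \<le> exp (real (card (I \<inter> A)) * l)"
      using l0 by (simp add: mult_left_mono mult.commute)
    also have "\<dots> = (1 + c) ^ card (I \<inter> A)" unfolding c_def by (simp add: exp_of_nat_mult)
    finally show "exp (l * (real s * p + t)) \<le> (1 + c) ^ card (I \<inter> A)" .
  qed
  also have "\<dots> \<le> (\<Sum>I\<in>\<Omega>. (1 + c) ^ card (I \<inter> A))"
    using EO fO c0 by (intro sum_mono2) auto
  also have "\<dots> \<le> real (card \<Omega>) * (1 + c * p) ^ s"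
    unfolding \<Omega>_def p_def using mgf_bound[OF A sn n c0] by (simp add: mult_ac)
  also have "(1 + c * p) ^ s \<le> exp (l * p + l\<^sup>2 / 8) ^ s"
  proof (rule power_mono)
    have pos: "0 < 1 + p * (exp l - 1)" using p0 l0 by (simp add: add_pos_nonneg)
    have "- l * p + ln (1 + p * (exp l - 1)) \<le> l\<^sup>2 / 8"
      using Hoeffdings_lemma_aux[OF l0 p0] by simp
    hence "ln (1 + p * (exp l - 1)) \<le> l * p + l\<^sup>2 / 8" by simp
    hence "exp (ln (1 + p * (exp l - 1))) \<le> exp (l * p + l\<^sup>2 / 8)" by simp
    thus "1 + c * p \<le> exp (l * p + l\<^sup>2 / 8)" using pos unfolding c_def by (simp add: mult.commute)
    show "0 \<le> 1 + c * p" using c0 p0 by simp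
  qed
  hence "real (card \<Omega>) * (1 + c * p) ^ s \<le> real (card \<Omega>) * exp (l * p + l\<^sup>2 / 8) ^ s"
    by (intro mult_left_mono) auto
  also have "exp (l * p + l\<^sup>2 / 8) ^ s = exp (real s * (l * p + l\<^sup>2 / 8))"
    by (simp add: exp_of_nat_mult)
  finally have "real (card E) * exp (l * (real s * p + t)) \<le> real (card \<Omega>) * exp (real s * (l * p + l\<^sup>2 / 8))" .
  hence "real (card E) \<le> real (card \<Omega>) * exp (real s * (l * p + l\<^sup>2 / 8)) / exp (l * (real s * p + t))"
    by (simp add: field_simps)
  also have "\<dots> = real (card \<Omega>) * exp (real s * (l * p + l\<^sup>2 / 8) - l * (real s * p + t))"
    by (simp add: exp_diff)
  also have "real s * (l * p + l\<^sup>2 / 8) - l * (real s * p + t) = - 2 * t\<^sup>2 / real s"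
    unfolding l_def using s by (simp add: field_simps power2_eq_square)
  finally show ?thesis unfolding E_def \<Omega>_def p_def by simp
qed

lemma lower_tail:
  assumes A: "A \<subseteq> {0..<n}" and sn: "s \<le> n" and s: "0 < s" and t: "t \<ge> 0"
  shows "real (card {I\<in>sample_space n s. real (card (I \<inter> A)) \<le> real s * real (card A) / real n - t})
           \<le> real (card (sample_space n s)) * exp (- 2 * t\<^sup>2 / real s)"
proof -
  define A' where "A' = {0..<n} - A"
  have n: "0 < n" using s sn by simp
  have fA: "finite A" using A finite_subset by blast
  have cA': "real (card A') = real n - real (card A)"
    unfolding A'_def using A fA by (simp add: card_Diff_subset of_nat_diff card_mono[of "{0..<n}" A, simplified])
  have "{I\<in>sample_space n s. real (card (I \<inter> A)) \<le> real s * real (card A) / real n - t}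
        \<subseteq> {I\<in>sample_space n s. real s * real (card A') / real n + t \<le> real (card (I \<inter> A'))}"
  proof
    fix I assume "I \<in> {I\<in>sample_space n s. real (card (I \<inter> A)) \<le> real s * real (card A) / real n - t}"
    hence I: "I \<subseteq> {0..<n}" "card I = s" and le: "real (card (I \<inter> A)) \<le> real s * real (card A) / real n - t"
      unfolding sample_space_def by auto
    have fI: "finite I" using I finite_subset by blast
    have "I \<inter> A' = I - (I \<inter> A)" unfolding A'_def using I by blast
    hence "card (I \<inter> A') = s - card (I \<inter> A)" using fI I by (simp add: card_Diff_subset)
    moreover have "card (I \<inter> A) \<le> s" using I fI by (metis card_mono inf_le1)
    ultimately have "real (card (I \<inter> A')) = real s - real (card (I \<inter> A))" by simp
    moreover have "real s * real (card A') / real n = real s - real s * real (card A) / real n"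
      using cA' n by (simp add: field_simps) (metis distrib_left mult.commute)
    ultimately show "I \<in> {I\<in>sample_space n s. real s * real (card A') / real n + t \<le> real (card (I \<inter> A'))}"
      using le \<open>I \<in> _\<close> by auto
  qed
  hence "card {I\<in>sample_space n s. real (card (I \<inter> A)) \<le> real s * real (card A) / real n - t}
        \<le> card {I\<in>sample_space n s. real s * real (card A') / real n + t \<le> real (card (I \<inter> A'))}"
    by (intro card_mono) (auto intro: finite_subset[OF _ finite_sample_space])
  hence "real (card {I\<in>sample_space n s. real (card (I \<inter> A)) \<le> real s * real (card A) / real n - t})
        \<le> real (card {I\<in>sample_space n s. real s * real (card A') / real n + t \<le> real (card (I \<inter> A'))})"
    by linarith
  also have "\<dots> \<le> real (card (sample_space n s)) * exp (- 2 * t\<^sup>2 / real s)"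
    by (rule upper_tail) (use sn s t in \<open>auto simp: A'_def\<close>)
  finally show ?thesis .
qed



lemma sorted_nth_down_iff:
  assumes srt: "sorted zs" and i: "1 \<le> i" "i \<le> length zs"
    and down: "\<And>x y. P y \<Longrightarrow> x \<le> y \<Longrightarrow> P x"
  shows "P (zs ! (i - 1)) \<longleftrightarrow> i \<le> length (filter P zs)"
proof -
  have cnt: "length (filter P zs) = card {j. j < length zs \<and> P (zs ! j)}"
    by (rule length_filter_conv_card)
  show ?thesis
  proof
    assume p: "P (zs ! (i - 1))"
    have "{..<i} \<subseteq> {j. j < length zs \<and> P (zs ! j)}"
    proof
      fix j assume "j \<in> {..<i}"
      hence j: "j \<le> i - 1" "j < length zs" using i by auto
      have "zs ! j \<le> zs ! (i - 1)" using sorted_nth_mono[OF srt j(1)] i by simp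
      thus "j \<in> {j. j < length zs \<and> P (zs ! j)}" using p down j by blast
    qed
    hence "card {..<i} \<le> card {j. j < length zs \<and> P (zs ! j)}" by (intro card_mono) auto
    thus "i \<le> length (filter P zs)" using cnt by simp
  next
    assume le: "i \<le> length (filter P zs)"
    show "P (zs ! (i - 1))"
    proof (rule ccontr)
      assume np: "\<not> P (zs ! (i - 1))"
      have "{j. j < length zs \<and> P (zs ! j)} \<subseteq> {..<i - 1}"
      proof
        fix j assume "j \<in> {j. j < length zs \<and> P (zs ! j)}"
        hence j: "j < length zs" "P (zs ! j)" by auto
        show "j \<in> {..<i - 1}"
        proof (rule ccontr)
          assume "j \<notin> {..<i - 1}"
          hence "i - 1 \<le> j" by simp
          hence "zs ! (i - 1) \<le> zs ! j" using sorted_nth_mono[OF srt] j by simp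
          thus False using np down j by blast
        qed
      qed
      hence "card {j. j < length zs \<and> P (zs ! j)} \<le> card {..<i - 1}" by (intro card_mono) auto
      thus False using cnt le i by simp
    qed
  qed
qed

lemma ystar_down_iff:
  assumes fin: "finite I" and i: "1 \<le> i" "i \<le> card I"
    and down: "\<And>x y. P y \<Longrightarrow> x \<le> y \<Longrightarrow> P x"
  shows "P (ystar X I i) \<longleftrightarrow> i \<le> card {j\<in>I. P (X ! j)}"
proof -
  define xs where "xs = map (\<lambda>j. X ! j) (sorted_list_of_set I)"
  have len: "length (sort xs) = card I" unfolding xs_def using fin by simp
  have "length (filter P (sort xs)) = length (filter P xs)"
    by (metis filter_sort length_sort)
  also have "\<dots> = length (filter (\<lambda>j. P (X ! j)) (sorted_list_of_set I))"
    unfolding xs_def by (simp add: filter_map comp_def)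
  also have "\<dots> = card ({j. P (X ! j)} \<inter> I)"
    using fin by (subst distinct_length_filter) auto
  also have "{j. P (X ! j)} \<inter> I = {j\<in>I. P (X ! j)}" by blast
  finally have f: "length (filter P (sort xs)) = card {j\<in>I. P (X ! j)}" .
  have "P (sort xs ! (i - 1)) \<longleftrightarrow> i \<le> length (filter P (sort xs))"
    using i len down by (intro sorted_nth_down_iff) auto
  thus ?thesis unfolding ystar_def sorted_sample_def xs_def[symmetric] f .
qed

lemma ystar_lt_iff:
  "finite I \<Longrightarrow> 1 \<le> i \<Longrightarrow> i \<le> card I \<Longrightarrow> ystar X I i < w \<longleftrightarrow> i \<le> card {j\<in>I. X ! j < w}"
  by (rule ystar_down_iff[where P = "\<lambda>y. y < w"]) auto

lemma ystar_le_iff: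
  "finite I \<Longrightarrow> 1 \<le> i \<Longrightarrow> i \<le> card I \<Longrightarrow> ystar X I i \<le> w \<longleftrightarrow> i \<le> card {j\<in>I. X ! j \<le> w}"
  by (rule ystar_down_iff[where P = "\<lambda>y. y \<le> w"]) auto



locale lctx =
  fixes X :: "'a::linorder list" and n k s :: nat and g :: real
  assumes nX: "n = length X" and k1: "1 \<le> k" and kn: "k \<le> n" and s1: "1 \<le> s"
    and sn: "s \<le> n - 1" and g0: "g > 0"

context lctx
begin

lemma n_pos: "0 < n" using k1 kn by simp

lemma ks_le: "real k * real s / real n \<le> real s"
proof -
  have "real k * real s \<le> real n * real s" using kn by (intro mult_right_mono) auto
  thus ?thesis using n_pos by (simp add: divide_le_eq mult.commute)
qed

lemma iu_facts:
  "1 \<le> idx_u n k s g" "idx_u n k s g \<le> s"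
  "real k * real s / real n - g \<le> real (idx_u n k s g)"
  "idx_u n k s g = 1 \<or> real (idx_u n k s g) - 1 < real k * real s / real n - g"
proof -
  define x where "x = real k * real s / real n - g"
  have xs: "x \<le> real s" unfolding x_def using ks_le g0 by simp
  have "\<lceil>x\<rceil> \<le> int s" using xs by (simp add: ceiling_le_iff)
  have e: "idx_u n k s g = nat (max \<lceil>x\<rceil> 1)" unfolding idx_u_def x_def by simp
  show "1 \<le> idx_u n k s g" unfolding e by simp
  show "idx_u n k s g \<le> s" unfolding e using \<open>\<lceil>x\<rceil> \<le> int s\<close> s1 by simp
  have r: "real (idx_u n k s g) = max (real_of_int \<lceil>x\<rceil>) 1" unfolding e by simp
  have cc: "real_of_int \<lceil>x\<rceil> - 1 < x" "x \<le> real_of_int \<lceil>x\<rceil>" using ceiling_correct[of x] by auto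
  show "real k * real s / real n - g \<le> real (idx_u n k s g)"
    unfolding x_def[symmetric] r using cc by linarith
  show "idx_u n k s g = 1 \<or> real (idx_u n k s g) - 1 < real k * real s / real n - g"
  proof (cases "\<lceil>x\<rceil> \<le> 1")
    case True then show ?thesis unfolding e by simp
  next
    case False then show ?thesis unfolding x_def[symmetric] r using cc by (simp add: max_def)
  qed
qed

lemma iv_facts:
  "1 \<le> idx_v n k s g" "idx_v n k s g \<le> s"
  "real (idx_v n k s g) - 1 < real k * real s / real n + g"
  "idx_v n k s g = s \<or> real k * real s / real n + g \<le> real (idx_v n k s g)"
proof -
  define x where "x = real k * real s / real n + g"
  have x0: "x > 0" unfolding x_def using g0 by (simp add: add_nonneg_pos)
  have c1: "\<lceil>x\<rceil> \<ge> 1" using x0 by (simp add: one_le_ceiling) 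
  have e: "idx_v n k s g = nat (min \<lceil>x\<rceil> (int s))" unfolding idx_v_def x_def by simp
  have m1: "1 \<le> min \<lceil>x\<rceil> (int s)" using c1 s1 by linarith
  show "1 \<le> idx_v n k s g" unfolding e using m1 by (simp add: le_nat_iff)
  show "idx_v n k s g \<le> s" unfolding e by simp
  have r: "real (idx_v n k s g) = min (real_of_int \<lceil>x\<rceil>) (real s)" unfolding e using c1 by simp
  have cc: "real_of_int \<lceil>x\<rceil> - 1 < x" "x \<le> real_of_int \<lceil>x\<rceil>" using ceiling_correct[of x] by auto
  show "real (idx_v n k s g) - 1 < real k * real s / real n + g"
    unfolding x_def[symmetric] r using cc by linarith
  show "idx_v n k s g = s \<or> real k * real s / real n + g \<le> real (idx_v n k s g)"
  proof (cases "int s \<le> \<lceil>x\<rceil>")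
    case True then show ?thesis unfolding e by simp
  next
    case False then show ?thesis unfolding x_def[symmetric] r using cc by (simp add: min_def)
  qed
qed

end


context lctx
begin

lemma in_sample: "I \<in> sample_space n s \<Longrightarrow> finite I \<and> card I = s \<and> I \<subseteq> {0..<n}"
  unfolding sample_space_def using finite_subset by auto

lemma s_pos: "0 < s" using s1 by simp
lemma s_le_n: "s \<le> n" using sn by simp

lemma scale_mono: "a \<le> b \<Longrightarrow> real s * a / real n \<le> real s * b / real n"
  using n_pos by (intro divide_right_mono mult_left_mono) auto

lemma scaleT: "real s * (4 * g * real n / real s) / real n = 4 * g"
  using n_pos s_pos by (simp add: field_simps)

lemma pop_finite: "finite {0..<n}" "card {0..<n} = n" by auto

lemma card_sub_n: "card {j \<in> {0..<n}. P j} \<le> n"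
  by (metis (no_types, lifting) card_atLeastLessThan card_mono diff_zero finite_atLeastLessThan mem_Collect_eq subsetI)

lemma inter_eq: "I \<subseteq> {0..<n} \<Longrightarrow> {j\<in>I. P (X ! j)} = I \<inter> {j\<in>{0..<n}. P (X ! j)}"
  by blast

lemma ev1:
  "real (card {I\<in>sample_space n s. k \<le> card {j\<in>{0..<n}. X ! j < pivot_u X k s g I}
        \<and> 4 * g * real n / real s \<le> real (card {j\<in>{0..<n}. X ! j < pivot_u X k s g I})})
     \<le> real (card (sample_space n s)) * exp (- 2 * g\<^sup>2 / real s)"
  (is "real (card ?S) \<le> ?B")
proof (cases "?S = {}")
  case True then show ?thesis by (simp only: True card.empty of_nat_0) simp
next
  case False
  define T where "T = 4 * g * real n / real s"
  define iu where "iu = idx_u n k s g"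
  have u_def: "pivot_u X k s g I = ystar X I iu" for I unfolding pivot_u_def iu_def nX ..
  define m where "m = max k (nat \<lceil>T\<rceil>)"
  have T0: "T > 0" unfolding T_def using g0 n_pos s_pos by simp
  have mT: "T \<le> real m"
  proof -
    have "0 \<le> \<lceil>T\<rceil>" using T0 by simp
    hence "real (nat \<lceil>T\<rceil>) = real_of_int \<lceil>T\<rceil>" by simp
    moreover have "T \<le> real_of_int \<lceil>T\<rceil>" by (rule le_of_int_ceiling)
    moreover have "real (nat \<lceil>T\<rceil>) \<le> real m" unfolding m_def by simp
    ultimately show ?thesis by linarith
  qed
  have mge: "m \<le> card {j\<in>{0..<n}. X ! j < ystar X I iu}" if "I \<in> ?S" for I
  proof -
    have a: "k \<le> card {j\<in>{0..<n}. X ! j < ystar X I iu}" and b: "T \<le> real (card {j\<in>{0..<n}. X ! j < ystar X I iu})"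
      using that unfolding T_def u_def by auto
    have "nat \<lceil>T\<rceil> \<le> card {j\<in>{0..<n}. X ! j < ystar X I iu}" using b by (simp add: ceiling_le_iff nat_le_iff)
    thus ?thesis using a unfolding m_def by simp
  qed
  obtain I0 where "I0 \<in> ?S" using False by blast
  have m1: "1 \<le> m" unfolding m_def using k1 by simp
  have mn: "m \<le> n" using mge[OF \<open>I0 \<in> ?S\<close>] card_sub_n[of "\<lambda>j. X ! j < ystar X I0 iu"] by linarith
  define t where "t = ystar X {0..<n} m"
  define A where "A = {j\<in>{0..<n}. X ! j \<le> t}"
  have mA: "m \<le> card A" unfolding A_def using ystar_le_iff[of "{0..<n}" m X t] m1 mn t_def by simp
  have sub: "?S \<subseteq> {I\<in>sample_space n s. real (card (I \<inter> A)) \<le> real s * real (card A) / real n - g}"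
  proof
    fix I assume IS: "I \<in> ?S"
    hence IO: "I \<in> sample_space n s" by simp
    have Ip: "finite I" "card I = s" "I \<subseteq> {0..<n}" using in_sample[OF IO] by auto
    have "t < ystar X I iu" using ystar_lt_iff[of "{0..<n}" m X "ystar X I iu"] m1 mn mge[OF IS] t_def by simp
    hence "\<not> (ystar X I iu \<le> t)" by simp
    hence "\<not> (iu \<le> card {j\<in>I. X ! j \<le> t})"
      using ystar_le_iff[of I iu X t] Ip iu_facts(1,2) unfolding iu_def by simp
    moreover have "{j\<in>I. X ! j \<le> t} = I \<inter> A" unfolding A_def by (rule inter_eq[OF Ip(3)])
    ultimately have lt: "card (I \<inter> A) < iu" by simp
    have "real (card (I \<inter> A)) \<le> real s * real (card A) / real n - g"
    proof (cases "iu = 1")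
      case True
      hence "card (I \<inter> A) = 0" using lt by simp
      moreover have "4 * g \<le> real s * real (card A) / real n"
        using scale_mono[of T "real (card A)"] mT mA scaleT unfolding T_def by simp
      ultimately show ?thesis using g0 by simp
    next
      case False
      hence "real iu - 1 < real k * real s / real n - g" using iu_facts(4) unfolding iu_def by simp
      moreover have "real k * real s / real n \<le> real s * real (card A) / real n"
        using scale_mono[of "real k" "real (card A)"] mA unfolding m_def by (simp add: mult.commute)
      ultimately show ?thesis using lt by linarith
    qed
    thus "I \<in> {I\<in>sample_space n s. real (card (I \<inter> A)) \<le> real s * real (card A) / real n - g}"
      using IO by simp
  qed
  have "card ?S \<le> card {I\<in>sample_space n s. real (card (I \<inter> A)) \<le> real s * real (card A) / real n - g}"
    by (rule card_mono[OF _ sub]) (auto intro: finite_subset[OF _ finite_sample_space])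
  hence "real (card ?S) \<le> real (card {I\<in>sample_space n s. real (card (I \<inter> A)) \<le> real s * real (card A) / real n - g})"
    by linarith
  also have "\<dots> \<le> ?B" using g0 s_le_n s_pos by (intro lower_tail) (auto simp: A_def)
  finally show ?thesis .
qed


lemma card_split: "card {j\<in>{0..<n}. P j} + card {j\<in>{0..<n}. \<not> P j} = n"
proof -
  have "card ({j\<in>{0..<n}. P j} \<union> {j\<in>{0..<n}. \<not> P j}) = card {j\<in>{0..<n}. P j} + card {j\<in>{0..<n}. \<not> P j}"
    by (rule card_Un_disjoint) auto
  moreover have "{j\<in>{0..<n}. P j} \<union> {j\<in>{0..<n}. \<not> P j} = {0..<n}" by blast
  ultimately show ?thesis by simp
qed

lemma empty_case: "0 \<le> real (card (sample_space n s)) * exp (- 2 * g\<^sup>2 / real s)" by simp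

lemma nat_aux: "n - a < (k::nat) \<Longrightarrow> a \<le> n \<Longrightarrow> n - k + 1 \<le> a" using kn by arith

lemma ev2:
  "real (card {I\<in>sample_space n s. n - card {j\<in>{0..<n}. pivot_v X k s g I < X ! j} < k
        \<and> 4 * g * real n / real s \<le> real (card {j\<in>{0..<n}. pivot_v X k s g I < X ! j})})
     \<le> real (card (sample_space n s)) * exp (- 2 * g\<^sup>2 / real s)"
  (is "real (card ?S) \<le> ?B")
proof (cases "?S = {}")
  case True then show ?thesis by (simp only: True card.empty of_nat_0) simp
next
  case False
  define T where "T = 4 * g * real n / real s"
  define iv where "iv = idx_v n k s g"
  have v_def: "pivot_v X k s g I = ystar X I iv" for I unfolding pivot_v_def iv_def nX ..
  define m where "m = max (n - k + 1) (nat \<lceil>T\<rceil>)"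
  have T0: "T > 0" unfolding T_def using g0 n_pos s_pos by simp
  have mT: "T \<le> real m"
  proof -
    have "0 \<le> \<lceil>T\<rceil>" using T0 by simp
    hence "real (nat \<lceil>T\<rceil>) = real_of_int \<lceil>T\<rceil>" by simp
    moreover have "T \<le> real_of_int \<lceil>T\<rceil>" by (rule le_of_int_ceiling)
    moreover have "real (nat \<lceil>T\<rceil>) \<le> real m" unfolding m_def by simp
    ultimately show ?thesis by linarith
  qed
  have mge: "m \<le> card {j\<in>{0..<n}. ystar X I iv < X ! j}" if "I \<in> ?S" for I
  proof -
    have a: "n - card {j\<in>{0..<n}. ystar X I iv < X ! j} < k" and b: "T \<le> real (card {j\<in>{0..<n}. ystar X I iv < X ! j})"
      using that unfolding T_def v_def by auto
    have c: "card {j\<in>{0..<n}. ystar X I iv < X ! j} \<le> n" by (rule card_sub_n)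
    have "nat \<lceil>T\<rceil> \<le> card {j\<in>{0..<n}. ystar X I iv < X ! j}" using b by (simp add: ceiling_le_iff nat_le_iff)
    moreover have "n - k + 1 \<le> card {j\<in>{0..<n}. ystar X I iv < X ! j}" using nat_aux[OF a c] .
    ultimately show ?thesis unfolding m_def by simp
  qed
  obtain I0 where "I0 \<in> ?S" using False by blast
  have m1: "1 \<le> m" unfolding m_def by simp
  have mn: "m \<le> n" using mge[OF \<open>I0 \<in> ?S\<close>] card_sub_n[of "\<lambda>j. ystar X I0 iv < X ! j"] by linarith
  define r where "r = n - m + 1"
  have r1: "1 \<le> r" "r \<le> n" unfolding r_def using m1 mn by auto
  define t where "t = ystar X {0..<n} r"
  define A where "A = {j\<in>{0..<n}. X ! j < t}"
  have rA: "\<not> r \<le> card A" unfolding A_def using ystar_lt_iff[of "{0..<n}" r X t] r1 t_def by simp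
  hence Anm: "card A \<le> n - m" unfolding r_def by simp
  have sub: "?S \<subseteq> {I\<in>sample_space n s. real s * real (card A) / real n + g \<le> real (card (I \<inter> A))}"
  proof
    fix I assume IS: "I \<in> ?S"
    hence IO: "I \<in> sample_space n s" by simp
    have Ip: "finite I" "card I = s" "I \<subseteq> {0..<n}" using in_sample[OF IO] by auto
    have cs: "card {j\<in>{0..<n}. X ! j \<le> ystar X I iv} + card {j\<in>{0..<n}. \<not> X ! j \<le> ystar X I iv} = n"
      by (rule card_split)
    have "{j\<in>{0..<n}. \<not> X ! j \<le> ystar X I iv} = {j\<in>{0..<n}. ystar X I iv < X ! j}" by auto
    hence "card {j\<in>{0..<n}. X ! j \<le> ystar X I iv} < r" using cs mge[OF IS] unfolding r_def by simp
    hence "\<not> (t \<le> ystar X I iv)" using ystar_le_iff[of "{0..<n}" r X "ystar X I iv"] r1 t_def by simp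
    hence "ystar X I iv < t" by simp
    hence "iv \<le> card {j\<in>I. X ! j < t}"
      using ystar_lt_iff[of I iv X t] Ip iv_facts(1,2) unfolding iv_def by simp
    moreover have "{j\<in>I. X ! j < t} = I \<inter> A" unfolding A_def by (rule inter_eq[OF Ip(3)])
    ultimately have lt: "iv \<le> card (I \<inter> A)" by simp
    have "real s * real (card A) / real n + g \<le> real iv"
    proof (cases "iv = s")
      case True
      have "real (card A) \<le> real n - T" using Anm mT mn by linarith
      hence "real s * real (card A) / real n \<le> real s * (real n - T) / real n" by (rule scale_mono)
      also have "\<dots> = real s - 4 * g" using scaleT n_pos unfolding T_def
        by (simp add: diff_divide_distrib right_diff_distrib)
      finally show ?thesis using True g0 by simp
    next
      case False
      hence "real k * real s / real n + g \<le> real iv" using iv_facts(4) unfolding iv_def by simp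
      moreover have "real s * real (card A) / real n \<le> real k * real s / real n"
        using scale_mono[of "real (card A)" "real k"] Anm unfolding m_def by (simp add: mult.commute)
      ultimately show ?thesis by linarith
    qed
    thus "I \<in> {I\<in>sample_space n s. real s * real (card A) / real n + g \<le> real (card (I \<inter> A))}"
      using IO lt by simp
  qed
  have "card ?S \<le> card {I\<in>sample_space n s. real s * real (card A) / real n + g \<le> real (card (I \<inter> A))}"
    by (rule card_mono[OF _ sub]) (auto intro: finite_subset[OF _ finite_sample_space])
  hence "real (card ?S) \<le> real (card {I\<in>sample_space n s. real s * real (card A) / real n + g \<le> real (card (I \<inter> A))})"
    by linarith
  also have "\<dots> \<le> ?B" using g0 s_le_n s_pos by (intro upper_tail) (auto simp: A_def)
  finally show ?thesis .
qed

lemma ev3: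
  "real (card {I\<in>sample_space n s. real (card {j\<in>{0..<n}. X ! j \<le> pivot_u X k s g I})
        \<le> real k - 2 * g * real n / real s})
     \<le> real (card (sample_space n s)) * exp (- 2 * g\<^sup>2 / real s)"
  (is "real (card ?S) \<le> ?B")
proof (cases "?S = {}")
  case True then show ?thesis by (simp only: True card.empty of_nat_0) simp
next
  case False
  define D where "D = 2 * g * real n / real s"
  define iu where "iu = idx_u n k s g"
  have u_def: "pivot_u X k s g I = ystar X I iu" for I unfolding pivot_u_def iu_def nX ..
  have D0: "D > 0" unfolding D_def using g0 n_pos s_pos by simp
  have sD: "real s * (real k - D) / real n = real k * real s / real n - 2 * g"
    unfolding D_def using n_pos s_pos by (simp add: field_simps)
  obtain I0 where "I0 \<in> ?S" using False by blast
  hence kD: "0 \<le> real k - D" unfolding D_def by (smt (verit) mem_Collect_eq of_nat_0_le_iff)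
  define m where "m = nat \<lfloor>real k - D\<rfloor> + 1"
  have fl: "real (nat \<lfloor>real k - D\<rfloor>) = real_of_int \<lfloor>real k - D\<rfloor>" using kD by simp
  have fl2: "real_of_int \<lfloor>real k - D\<rfloor> \<le> real k - D" by (rule of_int_floor_le)
  have m1: "1 \<le> m" unfolding m_def by simp
  have mk: "m \<le> k" unfolding m_def using fl fl2 D0 by linarith
  have mn: "m \<le> n" using mk kn by simp
  define t where "t = ystar X {0..<n} m"
  define A where "A = {j\<in>{0..<n}. X ! j < t}"
  have rA: "\<not> m \<le> card A" unfolding A_def using ystar_lt_iff[of "{0..<n}" m X t] m1 mn t_def by simp
  hence AkD: "real (card A) \<le> real k - D" unfolding m_def using fl fl2 by linarith
  have sub: "?S \<subseteq> {I\<in>sample_space n s. real s * real (card A) / real n + g \<le> real (card (I \<inter> A))}"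
  proof
    fix I assume IS: "I \<in> ?S"
    hence IO: "I \<in> sample_space n s" by simp
    have Ip: "finite I" "card I = s" "I \<subseteq> {0..<n}" using in_sample[OF IO] by auto
    have "real (card {j\<in>{0..<n}. X ! j \<le> ystar X I iu}) \<le> real k - D" using IS unfolding D_def u_def by simp
    hence "int (card {j\<in>{0..<n}. X ! j \<le> ystar X I iu}) \<le> \<lfloor>real k - D\<rfloor>" by (simp add: le_floor_iff)
    hence "card {j\<in>{0..<n}. X ! j \<le> ystar X I iu} < m" unfolding m_def by linarith
    hence "\<not> (t \<le> ystar X I iu)" using ystar_le_iff[of "{0..<n}" m X "ystar X I iu"] m1 mn t_def by simp
    hence "ystar X I iu < t" by simp
    hence "iu \<le> card {j\<in>I. X ! j < t}"
      using ystar_lt_iff[of I iu X t] Ip iu_facts(1,2) unfolding iu_def by simp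
    moreover have "{j\<in>I. X ! j < t} = I \<inter> A" unfolding A_def by (rule inter_eq[OF Ip(3)])
    ultimately have lt: "iu \<le> card (I \<inter> A)" by simp
    have "real s * real (card A) / real n \<le> real s * (real k - D) / real n" using AkD by (rule scale_mono)
    moreover have "real k * real s / real n - g \<le> real iu" using iu_facts(3) unfolding iu_def .
    ultimately have "real s * real (card A) / real n + g \<le> real iu" using sD by linarith
    thus "I \<in> {I\<in>sample_space n s. real s * real (card A) / real n + g \<le> real (card (I \<inter> A))}"
      using IO lt by simp
  qed
  have "card ?S \<le> card {I\<in>sample_space n s. real s * real (card A) / real n + g \<le> real (card (I \<inter> A))}"
    by (rule card_mono[OF _ sub]) (auto intro: finite_subset[OF _ finite_sample_space])
  hence "real (card ?S) \<le> real (card {I\<in>sample_space n s. real s * real (card A) / real n + g \<le> real (card (I \<inter> A))})"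
    by linarith
  also have "\<dots> \<le> ?B" using g0 s_le_n s_pos by (intro upper_tail) (auto simp: A_def)
  finally show ?thesis .
qed

lemma ev4:
  "real (card {I\<in>sample_space n s. real k + 2 * g * real n / real s
        \<le> real (card {j\<in>{0..<n}. X ! j < pivot_v X k s g I})})
     \<le> real (card (sample_space n s)) * exp (- 2 * g\<^sup>2 / real s)"
  (is "real (card ?S) \<le> ?B")
proof (cases "?S = {}")
  case True then show ?thesis by (simp only: True card.empty of_nat_0) simp
next
  case False
  define D where "D = 2 * g * real n / real s"
  define iv where "iv = idx_v n k s g"
  have v_def: "pivot_v X k s g I = ystar X I iv" for I unfolding pivot_v_def iv_def nX ..
  have D0: "D > 0" unfolding D_def using g0 n_pos s_pos by simp
  have sD: "real s * (real k + D) / real n = real k * real s / real n + 2 * g"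
    unfolding D_def using n_pos s_pos by (simp add: field_simps)
  define m where "m = nat \<lceil>real k + D\<rceil>"
  have c0: "0 \<le> \<lceil>real k + D\<rceil>" using D0 by simp
  have cm: "real m = real_of_int \<lceil>real k + D\<rceil>" unfolding m_def using c0 by simp
  have mkD: "real k + D \<le> real m" using cm le_of_int_ceiling[of "real k + D"] by linarith
  have mge: "m \<le> card {j\<in>{0..<n}. X ! j < ystar X I iv}" if "I \<in> ?S" for I
  proof -
    have "real k + D \<le> real (card {j\<in>{0..<n}. X ! j < ystar X I iv})" using that unfolding D_def v_def by simp
    thus ?thesis unfolding m_def by (simp add: ceiling_le_iff nat_le_iff)
  qed
  obtain I0 where "I0 \<in> ?S" using False by blast
  have m1: "1 \<le> m" using mkD k1 D0 by linarith
  have mn: "m \<le> n" using mge[OF \<open>I0 \<in> ?S\<close>] card_sub_n[of "\<lambda>j. X ! j < ystar X I0 iv"] by linarith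
  define t where "t = ystar X {0..<n} m"
  define A where "A = {j\<in>{0..<n}. X ! j \<le> t}"
  have mA: "m \<le> card A" unfolding A_def using ystar_le_iff[of "{0..<n}" m X t] m1 mn t_def by simp
  have sub: "?S \<subseteq> {I\<in>sample_space n s. real (card (I \<inter> A)) \<le> real s * real (card A) / real n - g}"
  proof
    fix I assume IS: "I \<in> ?S"
    hence IO: "I \<in> sample_space n s" by simp
    have Ip: "finite I" "card I = s" "I \<subseteq> {0..<n}" using in_sample[OF IO] by auto
    have "t < ystar X I iv" using ystar_lt_iff[of "{0..<n}" m X "ystar X I iv"] m1 mn mge[OF IS] t_def by simp
    hence "\<not> (ystar X I iv \<le> t)" by simp
    hence "\<not> (iv \<le> card {j\<in>I. X ! j \<le> t})"
      using ystar_le_iff[of I iv X t] Ip iv_facts(1,2) unfolding iv_def by simp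
    moreover have "{j\<in>I. X ! j \<le> t} = I \<inter> A" unfolding A_def by (rule inter_eq[OF Ip(3)])
    ultimately have lt: "card (I \<inter> A) < iv" by simp
    have "real (card (I \<inter> A)) \<le> real iv - 1" using lt by linarith
    moreover have "real iv - 1 < real k * real s / real n + g" using iv_facts(3) unfolding iv_def .
    moreover have "real s * (real k + D) / real n \<le> real s * real (card A) / real n"
      using mkD mA by (intro scale_mono) linarith
    ultimately have "real (card (I \<inter> A)) \<le> real s * real (card A) / real n - g" using sD by linarith
    thus "I \<in> {I\<in>sample_space n s. real (card (I \<inter> A)) \<le> real s * real (card A) / real n - g}"
      using IO by simp
  qed
  have "card ?S \<le> card {I\<in>sample_space n s. real (card (I \<inter> A)) \<le> real s * real (card A) / real n - g}"
    by (rule card_mono[OF _ sub]) (auto intro: finite_subset[OF _ finite_sample_space])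
  hence "real (card ?S) \<le> real (card {I\<in>sample_space n s. real (card (I \<inter> A)) \<le> real s * real (card A) / real n - g})"
    by linarith
  also have "\<dots> \<le> ?B" using g0 s_le_n s_pos by (intro lower_tail) (auto simp: A_def)
  finally show ?thesis .
qed

end

context lctx begin
lemma if4: "r = (if a then 0 else if b then x else if c then y else z) \<Longrightarrow> r = (0::nat) \<or> (b \<and> r = x) \<or> (c \<and> r = y) \<or> r = z"
  by auto

lemma res_cases:
  fixes I
  defines "u \<equiv> pivot_u X k s g I" and "v \<equiv> pivot_v X k s g I"
  defines "L \<equiv> {j\<in>{0..<n}. X ! j < u}" and "R \<equiv> {j\<in>{0..<n}. v < X ! j}"
    and "M \<equiv> {j\<in>{0..<n}. u < X ! j \<and> X ! j < v}"
  shows "residual_size X k s g I = 0 \<or> (k \<le> card L \<and> residual_size X k s g I = card L)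
     \<or> (n - card R < k \<and> residual_size X k s g I = card R) \<or> residual_size X k s g I = card M"
  apply (rule if4)
  unfolding residual_size_def Let_def nX[symmetric] u_def[symmetric] v_def[symmetric]
    L_def[symmetric] R_def[symmetric] M_def[symmetric]
  apply (rule refl)
  done

lemma res_le_n: "residual_size X k s g I \<le> n"
proof -
  have a: "\<And>P. card {j\<in>{0..<n}. P j} \<le> n" by (rule card_sub_n)
  from res_cases[of I] show ?thesis
    by (elim disjE conjE) (simp_all only: a le0)
qed

lemma cover:
  assumes T: "4 * g * real n / real s \<le> real (residual_size X k s g I)"
  shows "(k \<le> card {j\<in>{0..<n}. X ! j < pivot_u X k s g I}
        \<and> 4 * g * real n / real s \<le> real (card {j\<in>{0..<n}. X ! j < pivot_u X k s g I}))
    \<or> (n - card {j\<in>{0..<n}. pivot_v X k s g I < X ! j} < k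
        \<and> 4 * g * real n / real s \<le> real (card {j\<in>{0..<n}. pivot_v X k s g I < X ! j}))
    \<or> real (card {j\<in>{0..<n}. X ! j \<le> pivot_u X k s g I}) \<le> real k - 2 * g * real n / real s
    \<or> real k + 2 * g * real n / real s \<le> real (card {j\<in>{0..<n}. X ! j < pivot_v X k s g I})"
proof -
  define u where "u = pivot_u X k s g I"
  define v where "v = pivot_v X k s g I"
  define M where "M = {j\<in>{0..<n}. u < X ! j \<and> X ! j < v}"
  define L where "L = {j\<in>{0..<n}. X ! j < u}"
  define R where "R = {j\<in>{0..<n}. v < X ! j}"
  define LU where "LU = {j\<in>{0..<n}. X ! j \<le> u}"
  define LV where "LV = {j\<in>{0..<n}. X ! j < v}"
  define T' where "T' = 4 * g * real n / real s"
  define r where "r = residual_size X k s g I"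
  have T0: "T' > 0" unfolding T'_def using g0 n_pos s_pos by simp
  have rc: "r = 0 \<or> (k \<le> card L \<and> r = card L) \<or> (n - card R < k \<and> r = card R) \<or> r = card M"
    using res_cases[of I] unfolding r_def u_def v_def L_def R_def M_def .
  have Tr: "T' \<le> real r" using T unfolding T'_def r_def .
  have "r \<noteq> 0" using Tr T0 by auto
  moreover
  have "real (card LU) \<le> real k - 2 * g * real n / real s \<or> real k + 2 * g * real n / real s \<le> real (card LV)"
    if rM: "r = card M"
  proof -
    have TM: "T' \<le> real (card M)" using Tr rM by simp
    hence "M \<noteq> {}" using T0 by auto
    then obtain j where "j \<in> M" by blast
    hence uv: "u < v" unfolding M_def by auto
    have sub: "LU \<subseteq> LV" unfolding LU_def LV_def using uv by auto
    have "M = LV - LU" unfolding M_def LV_def LU_def by auto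
    hence "card M = card LV - card LU" using sub by (simp add: card_Diff_subset LU_def)
    moreover have "card LU \<le> card LV" using sub by (intro card_mono) (auto simp: LV_def)
    ultimately have "real (card M) = real (card LV) - real (card LU)" by simp
    thus ?thesis using TM unfolding T'_def by linarith
  qed
  ultimately have "(k \<le> card L \<and> T' \<le> real (card L)) \<or> (n - card R < k \<and> T' \<le> real (card R))
     \<or> real (card LU) \<le> real k - 2 * g * real n / real s \<or> real k + 2 * g * real n / real s \<le> real (card LV)"
    using rc Tr by auto
  thus ?thesis unfolding T'_def L_def R_def LU_def LV_def u_def v_def .
qed
end

theorem lemma3p3:
  fixes X :: "'a::linorder list" and k s :: nat and g :: real
  defines "n \<equiv> length X"
  defines "P \<equiv> pmf_of_set (sample_space n s)"
  assumes "n \<ge> 2" and "1 \<le> k" and "k \<le> n" and "1 \<le> s" and "s \<le> n - 1" and "g > 0"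
  shows "measure_pmf.prob P {I. real (residual_size X k s g I) < 4 * g * real n / real s}
           \<ge> 1 - 4 * exp (- 2 * g\<^sup>2 / real s) \<and>
         measure_pmf.expectation P (\<lambda>I. real (residual_size X k s g I))
           \<le> 4 * g * real n / real s + 4 * real n * exp (- 2 * g\<^sup>2 / real s)"
proof -
  interpret lctx X n k s g using assms by unfold_locales auto
  define \<Omega> where "\<Omega> = sample_space n s"
  define T where "T = 4 * g * real n / real s"
  define e where "e = exp (- 2 * g\<^sup>2 / real s)"
  define res where "res = (\<lambda>I. residual_size X k s g I)"
  have fO: "finite \<Omega>" unfolding \<Omega>_def by (rule finite_sample_space)
  have cO: "card \<Omega> > 0" unfolding \<Omega>_def card_sample_space using s_le_n by simp
  hence neO: "\<Omega> \<noteq> {}" by auto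
  define S1 where "S1 = {I\<in>sample_space n s. k \<le> card {j\<in>{0..<n}. X ! j < pivot_u X k s g I}
        \<and> 4 * g * real n / real s \<le> real (card {j\<in>{0..<n}. X ! j < pivot_u X k s g I})}"
  define S2 where "S2 = {I\<in>sample_space n s. n - card {j\<in>{0..<n}. pivot_v X k s g I < X ! j} < k
        \<and> 4 * g * real n / real s \<le> real (card {j\<in>{0..<n}. pivot_v X k s g I < X ! j})}"
  define S3 where "S3 = {I\<in>sample_space n s. real (card {j\<in>{0..<n}. X ! j \<le> pivot_u X k s g I})
        \<le> real k - 2 * g * real n / real s}"
  define S4 where "S4 = {I\<in>sample_space n s. real k + 2 * g * real n / real s
        \<le> real (card {j\<in>{0..<n}. X ! j < pivot_v X k s g I})}"
  define B where "B = {I\<in>\<Omega>. T \<le> real (res I)}"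
  have BS: "B \<subseteq> S1 \<union> S2 \<union> S3 \<union> S4"
  proof
    fix I assume "I \<in> B"
    hence "I \<in> \<Omega>" "T \<le> real (res I)" unfolding B_def by auto
    thus "I \<in> S1 \<union> S2 \<union> S3 \<union> S4" using cover[of I] unfolding S1_def S2_def S3_def S4_def \<Omega>_def T_def res_def
      by auto
  qed
  have fS: "finite S1" "finite S2" "finite S3" "finite S4"
    unfolding S1_def S2_def S3_def S4_def using finite_sample_space by auto
  have "card B \<le> card (S1 \<union> S2 \<union> S3 \<union> S4)" using BS fS by (intro card_mono) auto
  also have "\<dots> \<le> card S1 + card S2 + card S3 + card S4"
    by (meson add_le_mono card_Un_le le_refl order_trans)
  finally have "real (card B) \<le> real (card S1) + real (card S2) + real (card S3) + real (card S4)"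
    by linarith
  also have "\<dots> \<le> 4 * (real (card \<Omega>) * e)"
    using ev1 ev2 ev3 ev4 unfolding S1_def S2_def S3_def S4_def \<Omega>_def e_def by linarith
  finally have cB: "real (card B) \<le> 4 * (real (card \<Omega>) * e)" .
  have BO: "B \<subseteq> \<Omega>" unfolding B_def by auto
  have fB: "finite B" using BO fO finite_subset by blast
  have part1: "measure_pmf.prob P {I. real (res I) < T} \<ge> 1 - 4 * e"
  proof -
    have "measure_pmf.prob P {I. real (res I) < T} = real (card (\<Omega> \<inter> {I. real (res I) < T})) / real (card \<Omega>)"
      unfolding P_def \<Omega>_def[symmetric] by (rule measure_pmf_of_set[OF neO fO])
    also have "\<Omega> \<inter> {I. real (res I) < T} = \<Omega> - B" unfolding B_def by auto
    also have "real (card (\<Omega> - B)) = real (card \<Omega>) - real (card B)"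
      using BO fB by (simp add: card_Diff_subset of_nat_diff card_mono fO)
    finally have "measure_pmf.prob P {I. real (res I) < T} = 1 - real (card B) / real (card \<Omega>)"
      using cO by (simp add: diff_divide_distrib)
    moreover have "real (card B) / real (card \<Omega>) \<le> 4 * e" using cB cO by (simp add: divide_le_eq mult_ac)
    ultimately show ?thesis by linarith
  qed
  have part2: "measure_pmf.expectation P (\<lambda>I. real (res I)) \<le> T + 4 * real n * e"
  proof -
    have "measure_pmf.expectation P (\<lambda>I. real (res I)) = (\<Sum>I\<in>\<Omega>. real (res I)) / real (card \<Omega>)"
      unfolding P_def \<Omega>_def[symmetric] by (rule integral_pmf_of_set[OF neO fO])
    also have "(\<Sum>I\<in>\<Omega>. real (res I)) \<le> (\<Sum>I\<in>\<Omega>. T + real n * (if I \<in> B then 1 else 0))"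
    proof (rule sum_mono)
      fix I assume "I \<in> \<Omega>"
      have "res I \<le> n" unfolding res_def by (rule res_le_n)
      moreover have "T \<ge> 0" unfolding T_def using assms by simp
      ultimately show "real (res I) \<le> T + real n * (if I \<in> B then 1 else 0)"
        using \<open>I \<in> \<Omega>\<close> unfolding B_def by auto
    qed
    also have "\<dots> = real (card \<Omega>) * T + real n * real (card B)"
      using fO BO by (simp add: sum.distrib sum_distrib_left[symmetric] sum.If_cases Int_absorb1)
    finally have "measure_pmf.expectation P (\<lambda>I. real (res I)) \<le> (real (card \<Omega>) * T + real n * real (card B)) / real (card \<Omega>)"
      using cO by (simp add: divide_right_mono)
    also have "\<dots> = T + real n * (real (card B) / real (card \<Omega>))" using cO by (simp add: field_simps)
    also have "real (card B) / real (card \<Omega>) \<le> 4 * e" using cB cO by (simp add: divide_le_eq mult_ac)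
    hence "T + real n * (real (card B) / real (card \<Omega>)) \<le> T + real n * (4 * e)"
      by (intro add_left_mono mult_left_mono) auto
    finally show ?thesis by simp
  qed
  show ?thesis using part1 part2 unfolding T_def e_def res_def by simp
qed

end
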